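(* Let $(M,d)$ be a metric space, $\mathsf{P}\subseteq M$ a set of $n$ points, $1\le\ell\le k\le n$ integers and $m=\lfloor k/\ell\rfloor$. Let $\sigma_{\mathrm{med}}=\min_{S\subseteq\mathsf{P},|S|=m}\sum_{p\in\mathsf{P}} d_S(p,1)$ and $\sigma_{\mathrm{opt}}=\min_{C'\subseteq\mathsf{P},|C'|=k}\sum_{p\in\mathsf{P}} d_{C'}(p,\ell)$. Then $\sigma_{\mathrm{med}}\le 2\sigma_{\mathrm{opt}}$.
   Context: For a finite set $S\subseteq M$, a point $p\in M$ and an integer $1\le i\le|S|$, $d_S(p,i)$ denotes the radius of the smallest closed ball centered at $p$ containing at least $i$ points of $S$ (distance to the $i$-th nearest point of $S$). *)

theory Defs
  imports "HOL-Analysis.Analysis"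
begin

text \<open>d_S(p,i): radius of the smallest closed ball centered at p containing
at least i points of S (distance to the i-th nearest point of S).\<close>
definition kth_dist :: "'a::metric_space set \<Rightarrow> 'a \<Rightarrow> nat \<Rightarrow> real" where
  "kth_dist S p i = Inf {r. i \<le> card (S \<inter> cball p r)}"

end

theory Submission
  imports Defs
begin

lemma kth_le:
  assumes "finite S" "1 \<le> i" "i \<le> card (S \<inter> cball p r)"
  shows "kth_dist S p i \<le> r"
  unfolding kth_dist_def
proof (rule cInf_lower)
  show "r \<in> {r. i \<le> card (S \<inter> cball p r)}" using assms by simp
  show "bdd_below {r. i \<le> card (S \<inter> cball p r)}"
  proof (rule bdd_belowI)
    fix x assume "x \<in> {r. i \<le> card (S \<inter> cball p r)}"
    hence "S \<inter> cball p x \<noteq> {}" using assms(2) by auto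
    thus "0 \<le> x" by auto
  qed
qed

lemma kth_attain:
  assumes "finite C" "1 \<le> l" "l \<le> card C"
  shows "l \<le> card (C \<inter> cball p (kth_dist C p l))"
proof -
  define R where "R = {r. l \<le> card (C \<inter> cball p r)}"
  define D where "D = {d \<in> dist p ` C. d \<in> R}"
  have fD: "finite D" using assms(1) unfolding D_def by auto
  have Cne: "C \<noteq> {}" using assms by auto
  have "Max (dist p ` C) \<in> D"
  proof -
    have "C \<inter> cball p (Max (dist p ` C)) = C"
      using assms(1) by (auto simp: mem_cball)
    thus ?thesis using assms Cne unfolding D_def R_def by auto
  qed
  hence Dne: "D \<noteq> {}" by auto
  have low: "Min D \<le> r" if "r \<in> R" for r
  proof -
    define E where "E = {c\<in>C. dist p c \<le> r}"
    have "C \<inter> cball p r \<noteq> {}" using that assms(2) unfolding R_def by auto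
    hence Ene: "E \<noteq> {}" unfolding E_def by (auto simp: mem_cball)
    have fE: "finite E" using assms(1) unfolding E_def by auto
    define d where "d = Max (dist p ` E)"
    have dle: "d \<le> r" unfolding d_def using fE Ene by (auto simp: E_def)
    have "d \<in> dist p ` E" unfolding d_def using fE Ene by (intro Max_in) auto
    hence din: "d \<in> dist p ` C" unfolding E_def by auto
    have "C \<inter> cball p d = C \<inter> cball p r"
    proof
      show "C \<inter> cball p d \<subseteq> C \<inter> cball p r" using dle by (auto simp: mem_cball)
      show "C \<inter> cball p r \<subseteq> C \<inter> cball p d"
        unfolding d_def using fE by (auto simp: mem_cball E_def)
    qed
    hence "d \<in> D" using that din unfolding D_def R_def by auto
    thus ?thesis using fD dle by (meson Min_le order_trans)
  qed
  have "Min D \<in> R" using Min_in[OF fD Dne] unfolding D_def by auto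
  moreover have "Inf R = Min D"
    by (rule cInf_eq_minimum) (use \<open>Min D \<in> R\<close> low in auto)
  ultimately show ?thesis unfolding kth_dist_def R_def by simp
qed

lemma cover:
  fixes r :: "'a::metric_space \<Rightarrow> real" and A :: "'a \<Rightarrow> 'b set"
  assumes "finite Q"
    and "\<And>q q'. q\<in>Q \<Longrightarrow> q'\<in>Q \<Longrightarrow> A q \<inter> A q' \<noteq> {} \<Longrightarrow> r q' \<le> r q \<Longrightarrow> dist q q' \<le> 2 * r q"
    and "\<forall>q\<in>Q. A q \<noteq> {}"
  shows "\<exists>T\<subseteq>Q. (\<forall>t\<in>T. \<forall>t'\<in>T. t \<noteq> t' \<longrightarrow> A t \<inter> A t' = {}) \<and> (\<forall>q\<in>Q. \<exists>t\<in>T. dist q t \<le> 2 * r q)"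
  using assms
proof (induction "card Q" arbitrary: Q rule: less_induct)
  case less
  show ?case
  proof (cases "Q = {}")
    case True then show ?thesis by auto
  next
    case False
    obtain p where pQ: "p \<in> Q" and pmin: "\<forall>q\<in>Q. r p \<le> r q"
    proof -
      have "Min (r ` Q) \<in> r ` Q" using less.prems(1) False by (intro Min_in) auto
      then obtain p where "p \<in> Q" "r p = Min (r ` Q)" by auto
      moreover have "\<forall>q\<in>Q. Min (r ` Q) \<le> r q" using less.prems(1) by auto
      ultimately show ?thesis using that by auto
    qed
    define Q' where "Q' = {q\<in>Q. A q \<inter> A p = {}}"
    have "p \<notin> Q'" using less.prems(3) pQ unfolding Q'_def by auto
    hence sub: "Q' \<subset> Q" using pQ unfolding Q'_def by auto
    hence "card Q' < card Q" using less.prems(1) by (simp add: psubset_card_mono)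
    moreover have "finite Q'" using sub less.prems(1) by (meson finite_subset psubset_imp_subset)
    ultimately obtain T' where T': "T' \<subseteq> Q'" "\<forall>t\<in>T'. \<forall>t'\<in>T'. t \<noteq> t' \<longrightarrow> A t \<inter> A t' = {}"
       "\<forall>q\<in>Q'. \<exists>t\<in>T'. dist q t \<le> 2 * r q"
    proof -
      have "\<And>q q'. q\<in>Q' \<Longrightarrow> q'\<in>Q' \<Longrightarrow> A q \<inter> A q' \<noteq> {} \<Longrightarrow> r q' \<le> r q \<Longrightarrow> dist q q' \<le> 2 * r q"
        using less.prems(2) sub by blast
      moreover have "\<forall>q\<in>Q'. A q \<noteq> {}" using less.prems(3) sub by blast
      ultimately show ?thesis using less.hyps[OF \<open>card Q' < card Q\<close> \<open>finite Q'\<close>] that by blast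
    qed
    show ?thesis
    proof (intro exI[of _ "insert p T'"] conjI)
      show "insert p T' \<subseteq> Q" using T'(1) pQ sub by auto
      show "\<forall>t\<in>insert p T'. \<forall>t'\<in>insert p T'. t \<noteq> t' \<longrightarrow> A t \<inter> A t' = {}"
      proof (intro ballI impI)
        fix t t' assume tt: "t \<in> insert p T'" "t' \<in> insert p T'" "t \<noteq> t'"
        have "\<forall>x\<in>T'. A x \<inter> A p = {}" using T'(1) unfolding Q'_def by auto
        then show "A t \<inter> A t' = {}" using tt T'(2) by (cases "t = p"; cases "t' = p") (auto simp: Int_commute)
      qed
      show "\<forall>q\<in>Q. \<exists>t\<in>insert p T'. dist q t \<le> 2 * r q"
      proof
        fix q assume qQ: "q \<in> Q"
        show "\<exists>t\<in>insert p T'. dist q t \<le> 2 * r q"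
        proof (cases "q \<in> Q'")
          case True then show ?thesis using T'(3) by blast
        next
          case False
          hence "A q \<inter> A p \<noteq> {}" using qQ unfolding Q'_def by auto
          hence "dist q p \<le> 2 * r q" using less.prems(2)[OF qQ pQ] pmin qQ by auto
          thus ?thesis by blast
        qed
      qed
    qed
  qed
qed

theorem claim2:
  fixes P :: "'a::metric_space set" and n k l m :: nat
  assumes "finite P" and "card P = n"
    and "1 \<le> l" and "l \<le> k" and "k \<le> n"
    and "m = k div l"
  shows "Min ((\<lambda>S. \<Sum>p\<in>P. kth_dist S p 1) ` {S. S \<subseteq> P \<and> card S = m})
         \<le> 2 * Min ((\<lambda>C. \<Sum>p\<in>P. kth_dist C p l) ` {C. C \<subseteq> P \<and> card C = k})"
proof -
  have finK: "finite {C. C \<subseteq> P \<and> card C = k}" using assms(1) by auto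
  have neK: "{C. C \<subseteq> P \<and> card C = k} \<noteq> {}"
    using obtain_subset_with_card_n[of k P] assms by auto
  have "Min ((\<lambda>C. \<Sum>p\<in>P. kth_dist C p l) ` {C. C \<subseteq> P \<and> card C = k})
        \<in> (\<lambda>C. \<Sum>p\<in>P. kth_dist C p l) ` {C. C \<subseteq> P \<and> card C = k}"
    by (rule Min_in) (use finK neK in auto)
  then obtain C where C: "C \<subseteq> P" "card C = k"
    and Cmin: "Min ((\<lambda>C. \<Sum>p\<in>P. kth_dist C p l) ` {C. C \<subseteq> P \<and> card C = k})
               = (\<Sum>p\<in>P. kth_dist C p l)"
    by auto
  have fC: "finite C" using C assms(1) finite_subset by blast
  define r where "r p = kth_dist C p l" for p
  define A where "A q = C \<inter> cball q (r q)" for q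
  have Acard: "l \<le> card (A q)" for q
    unfolding A_def r_def using kth_attain[OF fC assms(3)] C assms by auto
  have "\<exists>T\<subseteq>P. (\<forall>t\<in>T. \<forall>t'\<in>T. t \<noteq> t' \<longrightarrow> A t \<inter> A t' = {}) \<and> (\<forall>q\<in>P. \<exists>t\<in>T. dist q t \<le> 2 * r q)"
  proof (rule cover[OF assms(1)])
    fix q q' assume "A q \<inter> A q' \<noteq> {}" "r q' \<le> r q"
    then obtain c where "dist q c \<le> r q" "dist q' c \<le> r q'"
      unfolding A_def by (auto simp: mem_cball)
    hence "dist q q' \<le> r q + r q'" using dist_triangle[of q q' c] dist_commute[of c q'] by linarith
    thus "dist q q' \<le> 2 * r q" using \<open>r q' \<le> r q\<close> by linarith
  next
    show "\<forall>q\<in>P. A q \<noteq> {}" 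
    proof
      fix q assume "q \<in> P"
      have "1 \<le> card (A q)" using Acard[of q] assms(3) by linarith
      thus "A q \<noteq> {}" by (intro notI) simp
    qed
  qed
  then obtain T where T: "T \<subseteq> P" "\<forall>t\<in>T. \<forall>t'\<in>T. t \<noteq> t' \<longrightarrow> A t \<inter> A t' = {}"
    "\<forall>q\<in>P. \<exists>t\<in>T. dist q t \<le> 2 * r q" by blast
  have fT: "finite T" using T(1) assms(1) finite_subset by blast
  have fA: "finite (A t)" for t unfolding A_def using fC by auto
  have "card T * l = (\<Sum>t\<in>T. l)" by simp
  also have "\<dots> \<le> (\<Sum>t\<in>T. card (A t))" by (rule sum_mono) (use Acard in auto)
  also have "\<dots> = card (\<Union>t\<in>T. A t)" by (rule card_UN_disjoint[symmetric]) (use fT fA T(2) in auto)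
  also have "\<dots> \<le> card C" by (rule card_mono[OF fC]) (auto simp: A_def)
  finally have "card T * l \<le> k" using C by simp
  hence cT: "card T \<le> m" using assms(3,6)
  proof -
    have "(card T * l) div l \<le> k div l" by (rule div_le_mono) fact
    thus ?thesis using assms(3,6) by simp
  qed
  have "m \<le> k" using assms(6) by simp
  hence "m - card T \<le> card (P - T)" 
  proof -
    have "card (P - T) = n - card T" using assms(1,2) fT T(1) by (simp add: card_Diff_subset)
    moreover have "m \<le> n" using \<open>m \<le> k\<close> assms(5) by linarith
    ultimately show ?thesis by linarith
  qed
  then obtain U where U: "U \<subseteq> P - T" "card U = m - card T"
    by (rule obtain_subset_with_card_n)
  define S where "S = T \<union> U"
  have fU: "finite U" using U(1) assms(1) finite_subset by blast
  have Ssub: "S \<subseteq> P" using T(1) U(1) unfolding S_def by auto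
  have "T \<inter> U = {}" using U(1) by auto
  hence "card S = card T + card U" unfolding S_def using fT fU by (rule card_Un_disjoint[rotated 2])
  hence Scard: "card S = m" using U(2) cT by linarith
  have fS: "finite S" using fT fU S_def by auto
  have "Min ((\<lambda>S. \<Sum>p\<in>P. kth_dist S p 1) ` {S. S \<subseteq> P \<and> card S = m}) \<le> (\<Sum>p\<in>P. kth_dist S p 1)"
    by (rule Min_le) (use assms(1) Ssub Scard in auto)
  also have "\<dots> \<le> (\<Sum>p\<in>P. 2 * r p)"
  proof (rule sum_mono)
    fix p assume "p \<in> P"
    then obtain t where t: "t \<in> T" "dist p t \<le> 2 * r p" using T(3) by blast
    have "1 \<le> card (S \<inter> cball p (dist p t))"
    proof -
      have "t \<in> S \<inter> cball p (dist p t)" using t S_def by (auto simp: mem_cball)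
      moreover have "finite (S \<inter> cball p (dist p t))" using fS by auto
      ultimately have "card (S \<inter> cball p (dist p t)) \<noteq> 0" by auto
      thus ?thesis by linarith
    qed
    hence "kth_dist S p 1 \<le> dist p t" using kth_le[OF fS] by auto
    thus "kth_dist S p 1 \<le> 2 * r p" using t by linarith
  qed
  also have "\<dots> = 2 * (\<Sum>p\<in>P. kth_dist C p l)" by (simp add: r_def sum_distrib_left)
  finally show ?thesis using Cmin by simp
qed

end
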